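(* Suppose $P$ is a transition kernel on finite $\mathcal{S}$ with actions $\mathcal{A}$, $\mathcal{K}=\{(s_k,a_k)\}_{k=1}^K$, and coefficients $\lambda_k^{s,a}\ge0$ with $\sum_k\lambda_k^{s,a}=1$ satisfy $P(\cdot|s,a)=\sum_{k}\lambda_k^{s,a}P(\cdot|s_k,a_k)$ for all $(s,a)$. Then for every $V:\mathcal{S}\to\mathbb{R}$ and every $(s,a)$, $$\sum_{k=1}^K\lambda_k^{s,a}\sqrt{\mathrm{Var}_{s_k,a_k}(V)}\le\sqrt{\mathrm{Var}_{s,a}(V)}.$$
   Context: $\mathrm{Var}_{s,a}(V)=\sum_{s'}P(s'|s,a)V(s')^2-\big(\sum_{s'}P(s'|s,a)V(s')\big)^2$. (In the paper this arises from a linear transition model $P=\Phi\Psi$ with features satisfying the anchor-state assumption, in which case $P(\cdot|s,a)=\sum_k\lambda_k^{s,a}P(\cdot|s_k,a_k)$ with the convex anchor coefficients.) *)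

theory Defs
  imports Main Complex_Main
begin

definition transition_kernel :: "('s::finite \<Rightarrow> 'a \<Rightarrow> 's \<Rightarrow> real) \<Rightarrow> bool" where
  "transition_kernel P \<longleftrightarrow> (\<forall>s a s'. P s a s' \<ge> 0) \<and> (\<forall>s a. (\<Sum>s'\<in>UNIV. P s a s') = 1)"

definition Var_sa :: "('s::finite \<Rightarrow> 'a \<Rightarrow> 's \<Rightarrow> real) \<Rightarrow> 's \<Rightarrow> 'a \<Rightarrow> ('s \<Rightarrow> real) \<Rightarrow> real" where
  "Var_sa P s a V = (\<Sum>s'\<in>UNIV. P s a s' * (V s')\<^sup>2) - (\<Sum>s'\<in>UNIV. P s a s' * V s')\<^sup>2"

end

theory Submission
  imports Defs
begin

lemma wjensen:
  fixes w x :: "'i \<Rightarrow> real"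
  assumes "finite A" "\<And>i. i \<in> A \<Longrightarrow> w i \<ge> 0" "(\<Sum>i\<in>A. w i) = 1"
  shows "(\<Sum>i\<in>A. w i * x i)\<^sup>2 \<le> (\<Sum>i\<in>A. w i * (x i)\<^sup>2)"
proof -
  define m where "m = (\<Sum>i\<in>A. w i * x i)"
  have "0 \<le> (\<Sum>i\<in>A. w i * (x i - m)\<^sup>2)"
    by (rule sum_nonneg) (simp add: assms(2))
  also have "\<dots> = (\<Sum>i\<in>A. w i * (x i)\<^sup>2 - 2 * m * (w i * x i) + m\<^sup>2 * w i)"
    by (rule sum.cong) (auto simp: power2_eq_square algebra_simps)
  also have "\<dots> = (\<Sum>i\<in>A. w i * (x i)\<^sup>2) - 2 * m * m + m\<^sup>2"
    by (simp add: sum.distrib sum_subtractf sum_distrib_left[symmetric] assms(3) m_def)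
  finally show ?thesis unfolding m_def by (simp add: power2_eq_square)
qed

theorem lemma3:
  fixes P :: "'s::finite \<Rightarrow> 'a \<Rightarrow> 's \<Rightarrow> real"
    and K :: nat
    and sk :: "nat \<Rightarrow> 's" and ak :: "nat \<Rightarrow> 'a"
    and lam :: "'s \<Rightarrow> 'a \<Rightarrow> nat \<Rightarrow> real"
    and V :: "'s \<Rightarrow> real" and s :: 's and a :: 'a
  assumes "transition_kernel P"
    and "\<And>s a k. k \<in> {1..K} \<Longrightarrow> lam s a k \<ge> 0"
    and "\<And>s a. (\<Sum>k=1..K. lam s a k) = 1"
    and "\<And>s a s'. P s a s' = (\<Sum>k=1..K. lam s a k * P (sk k) (ak k) s')"
  shows "(\<Sum>k=1..K. lam s a k * sqrt (Var_sa P (sk k) (ak k) V)) \<le> sqrt (Var_sa P s a V)"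
proof -
  define E1 where "E1 k = (\<Sum>s'\<in>UNIV. P (sk k) (ak k) s' * V s')" for k
  define E2 where "E2 k = (\<Sum>s'\<in>UNIV. P (sk k) (ak k) s' * (V s')\<^sup>2)" for k
  define v where "v k = Var_sa P (sk k) (ak k) V" for k
  have vdef: "v k = E2 k - (E1 k)\<^sup>2" for k
    unfolding v_def E1_def E2_def Var_sa_def by simp
  have vnn: "v k \<ge> 0" for k
  proof -
    have "(E1 k)\<^sup>2 \<le> E2 k" unfolding E1_def E2_def
      using assms(1) by (intro wjensen) (auto simp: transition_kernel_def)
    thus ?thesis using vdef by simp
  qed
  have X1: "(\<Sum>s'\<in>UNIV. P s a s' * V s') = (\<Sum>k=1..K. lam s a k * E1 k)"
    unfolding E1_def
    by (simp add: assms(4)[of s a] sum_distrib_left sum_distrib_right sum.swap[of _ UNIV] mult.assoc)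
  have X2: "(\<Sum>s'\<in>UNIV. P s a s' * (V s')\<^sup>2) = (\<Sum>k=1..K. lam s a k * E2 k)"
    unfolding E2_def
    by (simp add: assms(4)[of s a] sum_distrib_left sum_distrib_right sum.swap[of _ UNIV] mult.assoc)
  have VV: "Var_sa P s a V = (\<Sum>k=1..K. lam s a k * E2 k) - (\<Sum>k=1..K. lam s a k * E1 k)\<^sup>2"
    unfolding Var_sa_def X1 X2 ..
  have J1: "(\<Sum>k=1..K. lam s a k * E1 k)\<^sup>2 \<le> (\<Sum>k=1..K. lam s a k * (E1 k)\<^sup>2)"
    using assms(2,3) by (intro wjensen) blast+
  have "(\<Sum>k=1..K. lam s a k * v k) = (\<Sum>k=1..K. lam s a k * E2 k) - (\<Sum>k=1..K. lam s a k * (E1 k)\<^sup>2)"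
    by (simp add: vdef right_diff_distrib sum_subtractf)
  hence G: "(\<Sum>k=1..K. lam s a k * v k) \<le> Var_sa P s a V" using VV J1 by linarith
  have J2: "(\<Sum>k=1..K. lam s a k * sqrt (v k))\<^sup>2 \<le> (\<Sum>k=1..K. lam s a k * (sqrt (v k))\<^sup>2)"
    using assms(2,3) by (intro wjensen) blast+
  also have "\<dots> = (\<Sum>k=1..K. lam s a k * v k)" using vnn by simp
  finally have "(\<Sum>k=1..K. lam s a k * sqrt (v k))\<^sup>2 \<le> Var_sa P s a V" using G by linarith
  hence "sqrt ((\<Sum>k=1..K. lam s a k * sqrt (v k))\<^sup>2) \<le> sqrt (Var_sa P s a V)"
    using real_sqrt_le_mono by blast
  moreover have "(\<Sum>k=1..K. lam s a k * sqrt (v k)) \<le> sqrt ((\<Sum>k=1..K. lam s a k * sqrt (v k))\<^sup>2)"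
    by simp
  ultimately show ?thesis unfolding v_def by linarith
qed

end
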